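(* There exist constants $0<\varepsilon\le M<\infty$, $\rho\in\mathbb R$, $0<\alpha<\infty$ and $\beta>0$ such that, with $$\mathcal C:=\{(\lambda,\Gamma,\Theta):\ \varepsilon\le\lambda\le M,\ \rho I\preceq\Theta-\Gamma\preceq I,\ 0\preceq\Gamma\preceq\alpha I,\ \Gamma\in\mathbf D_n,\ \Theta\in\mathbf M_n,\ \hat\Sigma^{-1}+\lambda^{-1}(\Theta-\Gamma)\succeq\beta I\},$$ the problem $\min_{(\lambda,\Gamma,\Theta)\in\mathcal C_0}\tilde J(\lambda,\Gamma,\Theta)$ is equivalent to $\min_{(\lambda,\Gamma,\Theta)\in\mathcal C}\tilde J(\lambda,\Gamma,\Theta)$, in the sense that $\inf_{\mathcal C_0}\tilde J=\inf_{\mathcal C}\tilde J$; moreover both problems admit a solution (the infimum is attained on $\mathcal C$, hence also on $\mathcal C_0$).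
   Context: Notation: $\mathbf Q_n$ real symmetric $n\times n$ matrices; $\mathbf D_n$ diagonal matrices; $\mathbf M_n$ symmetric matrices with zero diagonal; $\chi:\mathbf Q_n\to\mathbf Q_n$ the orthogonal projection onto $\mathbf M_n$ (keeps off-diagonal entries, zeroes the diagonal); $|\cdot|$ the determinant. $\hat\Sigma\in\mathbf Q_n$, $\hat\Sigma\succ0$; $\delta_{max}:=\log|[\hat\Sigma^{-1}-\chi(\hat\Sigma^{-1})]\hat\Sigma|$, and $0<\delta<\delta_{max}$. Define $$\tilde J(\lambda,\Gamma,\Theta):=\lambda\Big(-\log\big|\hat\Sigma^{-1}+\lambda^{-1}(\chi(\Theta)-\Gamma)\big|-\log|\hat\Sigma|+\delta\Big),$$ $$\mathcal C_0:=\{(\lambda,\Gamma,\Theta)\in\mathbb R\times\mathbf Q_n\times\mathbf Q_n:\ \lambda>0,\ I+\Gamma-\chi(\Theta)\succeq0,\ \Gamma\succeq0,\ \hat\Sigma^{-1}+\lambda^{-1}(\chi(\Theta)-\Gamma)\succ0\}.$$ *)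

theory Defs
  imports "HOL-Analysis.Analysis"
begin

type_synonym 'n sqmat = "real ^ 'n ^ 'n"

definition symmetric_mat :: "'n::finite sqmat \<Rightarrow> bool" where
  "symmetric_mat A \<longleftrightarrow> transpose A = A"

definition diagonal_mat :: "'n::finite sqmat \<Rightarrow> bool" where
  "diagonal_mat A \<longleftrightarrow> (\<forall>i j. i \<noteq> j \<longrightarrow> A $ i $ j = 0)"

definition zero_diag_sym :: "'n::finite sqmat \<Rightarrow> bool" where
  "zero_diag_sym A \<longleftrightarrow> symmetric_mat A \<and> (\<forall>i. A $ i $ i = 0)"

definition chi_proj :: "'n::finite sqmat \<Rightarrow> 'n sqmat" where
  "chi_proj A = (\<chi> i j. if i = j then 0 else A $ i $ j)"

definition psd :: "'n::finite sqmat \<Rightarrow> bool" where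
  "psd A \<longleftrightarrow> (\<forall>x. 0 \<le> x \<bullet> (A *v x))"

definition pd :: "'n::finite sqmat \<Rightarrow> bool" where
  "pd A \<longleftrightarrow> (\<forall>x. x \<noteq> 0 \<longrightarrow> 0 < x \<bullet> (A *v x))"

definition loewner_le :: "'n::finite sqmat \<Rightarrow> 'n sqmat \<Rightarrow> bool" where
  "loewner_le A B \<longleftrightarrow> psd (B - A)"

definition delta_max :: "'n::finite sqmat \<Rightarrow> real" where
  "delta_max S = ln (det ((matrix_inv S - chi_proj (matrix_inv S)) ** S))"

definition Jtilde :: "'n::finite sqmat \<Rightarrow> real \<Rightarrow> real \<times> 'n sqmat \<times> 'n sqmat \<Rightarrow> real" where
  "Jtilde S \<delta> = (\<lambda>(lam, \<Gamma>, \<Theta>).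
     lam * (- ln (det (matrix_inv S + (1 / lam) *\<^sub>R (chi_proj \<Theta> - \<Gamma>))) - ln (det S) + \<delta>))"

definition C0 :: "'n::finite sqmat \<Rightarrow> (real \<times> 'n sqmat \<times> 'n sqmat) set" where
  "C0 S = {(lam, \<Gamma>, \<Theta>). symmetric_mat \<Gamma> \<and> symmetric_mat \<Theta> \<and> lam > 0 \<and>
      psd (mat 1 + \<Gamma> - chi_proj \<Theta>) \<and> psd \<Gamma> \<and>
      pd (matrix_inv S + (1 / lam) *\<^sub>R (chi_proj \<Theta> - \<Gamma>))}"

definition C_restr :: "'n::finite sqmat \<Rightarrow> real \<Rightarrow> real \<Rightarrow> real \<Rightarrow> real \<Rightarrow> real
      \<Rightarrow> (real \<times> 'n sqmat \<times> 'n sqmat) set" where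
  "C_restr S \<epsilon> M \<rho> \<alpha> \<beta> = {(lam, \<Gamma>, \<Theta>). \<epsilon> \<le> lam \<and> lam \<le> M \<and>
      loewner_le (\<rho> *\<^sub>R mat 1) (\<Theta> - \<Gamma>) \<and> loewner_le (\<Theta> - \<Gamma>) (mat 1) \<and>
      loewner_le 0 \<Gamma> \<and> loewner_le \<Gamma> (\<alpha> *\<^sub>R mat 1) \<and>
      diagonal_mat \<Gamma> \<and> zero_diag_sym \<Theta> \<and>
      loewner_le (\<beta> *\<^sub>R mat 1) (matrix_inv S + (1 / lam) *\<^sub>R (\<Theta> - \<Gamma>))}"

end

theory Submission
  imports Defs
begin

lemma quad_axis: "axis i 1 \<bullet> (M *v axis j 1) = (M::real^'n^'n)$i$j"
  by (simp add: matrix_vector_mult_basis inner_axis' column_def)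


lemma inv_props: assumes "invertible (A::real^'n^'n)"
  shows "A ** matrix_inv A = mat 1" "matrix_inv A ** A = mat 1"
  using someI_ex[OF assms[unfolded invertible_def]] unfolding matrix_inv_def by auto

lemma psd_diag: "psd M \<Longrightarrow> 0 \<le> (M::real^'n^'n)$i$i"
  unfolding psd_def using quad_axis[of i M i] by metis

lemma psd_offdiag:
  assumes "psd M" "transpose M = M" 
  shows "2 * \<bar>(M::real^'n^'n)$i$j\<bar> \<le> M$i$i + M$j$j"
proof -
  have s: "M$j$i = M$i$j" using assms(2) by (metis transpose_def vec_lambda_beta)
  have "0 \<le> (axis i 1 + axis j 1) \<bullet> (M *v (axis i 1 + axis j 1))"
    using assms(1) unfolding psd_def by blast
  hence a: "0 \<le> M$i$i + M$j$j + 2 * M$i$j"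
    by (simp add: matrix_vector_right_distrib inner_add_left inner_add_right quad_axis s)
  have "0 \<le> (axis i 1 - axis j 1) \<bullet> (M *v (axis i 1 - axis j 1))"
    using assms(1) unfolding psd_def by blast
  hence b: "0 \<le> M$i$i + M$j$j - 2 * M$i$j"
    by (simp add: matrix_vector_mult_diff_distrib inner_diff_left inner_diff_right quad_axis s)
  show ?thesis using a b by linarith
qed

lemma continuous_det[continuous_intros]:
  fixes f :: "'a::topological_space \<Rightarrow> real^'n^'n"
  assumes "continuous_on U f"
  shows "continuous_on U (\<lambda>x. det (f x))"
  unfolding det_def
  by (intro continuous_intros assms)

lemma pd_diag: "pd M \<Longrightarrow> 0 < (M::real^'n^'n)$i$i"
  unfolding pd_def using quad_axis[of i M i] by (metis axis_eq_0_iff zero_neq_one)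

lemma quad_sym: "transpose M = M \<Longrightarrow> x \<bullet> (M *v y) = y \<bullet> ((M::real^'n^'n) *v x)"
  by (metis dot_lmul_matrix inner_commute vector_transpose_matrix)

lemma quad_scale: "(c *\<^sub>R x) \<bullet> ((M::real^'n^'n) *v (c *\<^sub>R x)) = c^2 * (x \<bullet> (M *v x))"
  by (simp add: matrix_vector_mult_scaleR power2_eq_square)

lemma cont_quad: "continuous_on UNIV (\<lambda>x. x \<bullet> ((M::real^'n^'n) *v x))"
  by (intro continuous_intros linear_continuous_on matrix_vector_mul_bounded_linear)

lemma quad_lower:
  fixes M :: "real^'n^'n"
  shows "\<exists>u. norm u = 1 \<and> (\<forall>x. (u \<bullet> (M *v u)) * (x \<bullet> x) \<le> x \<bullet> (M *v x))"
proof -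
  have "compact (sphere (0::real^'n) 1)" by simp
  moreover have "sphere (0::real^'n) 1 \<noteq> {}" by simp
  ultimately obtain u where u: "u \<in> sphere 0 1" and min: "\<forall>y\<in>sphere 0 1. u \<bullet> (M *v u) \<le> y \<bullet> (M *v y)"
    using continuous_attains_inf[OF _ _ continuous_on_subset[OF cont_quad]] by (metis subset_UNIV)
  have "(u \<bullet> (M *v u)) * (x \<bullet> x) \<le> x \<bullet> (M *v x)" for x
  proof (cases "x = 0")
    case True then show ?thesis by simp
  next
    case False
    let ?y = "(1 / norm x) *\<^sub>R x"
    have "?y \<in> sphere 0 1" using False by simp
    hence "u \<bullet> (M *v u) \<le> ?y \<bullet> (M *v ?y)" using min by blast
    also have "\<dots> = (1/norm x)^2 * (x \<bullet> (M *v x))" by (rule quad_scale)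
    finally have "u \<bullet> (M *v u) \<le> (1/norm x)^2 * (x \<bullet> (M *v x))" .
    hence "(x \<bullet> x) * (u \<bullet> (M *v u)) \<le> (x \<bullet> x) * ((1/norm x)^2 * (x \<bullet> (M *v x)))"
      by (simp add: mult_left_mono)
    also have "\<dots> = x \<bullet> (M *v x)" using False
      by (simp add: power2_norm_eq_inner[symmetric] field_simps)
    finally show ?thesis by (simp add: mult.commute)
  qed
  thus ?thesis using u by auto
qed

lemma psd_kernel:
  fixes M :: "real^'n^'n"
  assumes "psd M" "transpose M = M" "x \<bullet> (M *v x) = 0"
  shows "M *v x = 0"
proof (rule ccontr)
  assume ne: "M *v x \<noteq> 0"
  define y where "y = M *v x"
  define a where "a = y \<bullet> y"
  define c where "c = y \<bullet> (M *v y)"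
  have a: "a > 0" using ne unfolding a_def y_def by simp
  have c: "c \<ge> 0" using assms(1) unfolding psd_def c_def by blast
  have exp: "(x - t *\<^sub>R y) \<bullet> (M *v (x - t *\<^sub>R y)) = - 2 * t * a + t^2 * c" for t
  proof -
    have "x \<bullet> (M *v y) = y \<bullet> (M *v x)" by (rule quad_sym[OF assms(2)])
    thus ?thesis using assms(3) unfolding a_def c_def y_def
      by (simp add: matrix_vector_mult_diff_distrib matrix_vector_mult_scaleR inner_diff_left
          inner_diff_right algebra_simps power2_eq_square)
  qed
  define t where "t = a / (c + 1)"
  have t: "t > 0" using a c unfolding t_def by simp
  have "0 \<le> - 2 * t * a + t^2 * c" using assms(1) exp unfolding psd_def by metis
  hence "0 \<le> t * (- 2 * a + t * c)" by (simp add: algebra_simps power2_eq_square)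
  hence "0 \<le> - 2 * a + t * c" using t by (simp add: zero_le_mult_iff)
  moreover have "t * c < a" unfolding t_def using a c by (simp add: field_simps)
  ultimately show False using a by linarith
qed

lemma psd_det_pd:
  fixes M :: "real^'n^'n"
  assumes "psd M" "transpose M = M" "det M \<noteq> 0"
  shows "pd M"
  unfolding pd_def
proof (intro allI impI)
  fix x :: "real^'n" assume x: "x \<noteq> 0"
  have inj: "inj ((*v) M)" using assms(3) invertible_det_nz inj_matrix_vector_mult by blast
  have "0 \<le> x \<bullet> (M *v x)" using assms(1) unfolding psd_def by blast
  moreover have "x \<bullet> (M *v x) \<noteq> 0"
  proof
    assume "x \<bullet> (M *v x) = 0"
    hence "M *v x = M *v 0" using psd_kernel[OF assms(1,2)] by simp
    thus False using inj x by (meson injD)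
  qed
  ultimately show "0 < x \<bullet> (M *v x)" by linarith
qed



lemma congr_bilin:
  fixes E B :: "real^'n^'n"
  shows "x \<bullet> ((transpose E ** B ** E) *v y) = (E *v x) \<bullet> (B *v (E *v y))"
proof -
  have "(transpose E ** B ** E) *v y = transpose E *v (B *v (E *v y))"
    by (simp only: matrix_vector_mul_assoc matrix_mul_assoc)
  hence "x \<bullet> ((transpose E ** B ** E) *v y) = x \<bullet> (transpose E *v (B *v (E *v y)))" by simp
  also have "\<dots> = x \<bullet> ((B *v (E *v y)) v* E)" by (simp only: transpose_matrix_vector)
  also have "\<dots> = ((B *v (E *v y)) v* E) \<bullet> x" by (rule inner_commute)
  also have "\<dots> = (B *v (E *v y)) \<bullet> (E *v x)" by (rule dot_lmul_matrix)
  finally show ?thesis by (simp only: inner_commute)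
qed
lemma congr_entry:
  fixes E B :: "real^'n^'n"
  shows "(transpose E ** B ** E)$i$j = column i E \<bullet> (B *v column j E)"
proof -
  have "(transpose E ** B ** E)$i$j = axis i 1 \<bullet> ((transpose E ** B ** E) *v axis j 1)" by (simp only: quad_axis)
  also have "\<dots> = (E *v axis i 1) \<bullet> (B *v (E *v axis j 1))" by (rule congr_bilin)
  also have "\<dots> = column i E \<bullet> (B *v column j E)" by (simp only: matrix_vector_mult_basis)
  finally show ?thesis .
qed

lemma congr_sym:
  fixes E B :: "real^'n^'n"
  assumes "transpose B = B" shows "transpose (transpose E ** B ** E) = transpose E ** B ** E"
  by (simp only: matrix_transpose_mul transpose_transpose assms matrix_mul_assoc)

lemma congr_pd:
  fixes E B :: "real^'n^'n"
  assumes "pd B" "det E \<noteq> 0" shows "pd (transpose E ** B ** E)"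
  unfolding pd_def
proof (intro allI impI)
  fix x :: "real^'n" assume x: "x \<noteq> 0"
  have inj: "inj ((*v) E)" using assms(2) invertible_det_nz inj_matrix_vector_mult by blast
  have "E *v x \<noteq> 0" using inj x by (metis injD matrix_vector_mult_0_right)
  thus "0 < x \<bullet> ((transpose E ** B ** E) *v x)"
    using assms(1) unfolding pd_def congr_bilin by blast
qed



lemma row_mat1: "row j (mat 1 :: real^'n^'n) = axis j 1"
  by (simp add: row_def mat_def axis_def vec_eq_iff)

lemma det_shear:
  fixes c :: "'n::finite \<Rightarrow> real"
  shows "det ((\<chi> i j. if i = k then (if j = k then 1 else c j) else (if i = j then 1 else 0)) :: real^'n^'n) = 1"
proof -
  define x :: "real^'n" where "x = (\<Sum>j\<in>UNIV - {k}. c j *\<^sub>R axis j 1)"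
  have xc: "x $ l = (if l = k then 0 else c l)" for l
  proof -
    have "x $ l = (\<Sum>j\<in>UNIV - {k}. (if l = j then c j else 0))"
      unfolding x_def sum_component by (intro sum.cong) (auto simp: axis_def)
    thus ?thesis by simp
  qed
  have span: "x \<in> vec.span {row j (mat 1 :: real^'n^'n) |j. j \<noteq> k}"
    unfolding x_def
  proof (intro vec.span_sum)
    fix j assume "j \<in> UNIV - {k}"
    hence "axis j 1 \<in> {row j (mat 1 :: real^'n^'n) |j. j \<noteq> k}"
      using row_mat1[of j, symmetric] \<open>j \<in> UNIV - {k}\<close> by auto
    thus "c j *\<^sub>R axis j 1 \<in> vec.span {row j (mat 1 :: real^'n^'n) |j. j \<noteq> k}"
      using vec.span_scale[OF vec.span_base, of "axis j 1" _ "c j"] by (simp add: scalar_mult_eq_scaleR)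
  qed
  have eq: "((\<chi> i j. if i = k then (if j = k then 1 else c j) else (if i = j then 1 else 0)) :: real^'n^'n)
     = (\<chi> r. if r = k then row k (mat 1) + x else row r (mat 1))"
    by (auto simp: vec_eq_iff row_mat1 xc axis_def)
  show ?thesis unfolding eq det_row_span[OF span] by simp
qed

lemma ldl:
  fixes A :: "real^'n^'n"
  assumes sym: "transpose A = A" and pdA: "pd A"
  shows "\<exists>E. det E = 1 \<and> (\<forall>i j. i \<noteq> j \<longrightarrow> (transpose E ** A ** E)$i$j = 0) \<and>
    (\<forall>i. 0 < (transpose E ** A ** E)$i$i \<and> (transpose E ** A ** E)$i$i \<le> A$i$i)"
proof -
  have "finite J \<Longrightarrow> \<exists>E. det E = 1 \<and> (\<forall>i\<in>J. \<forall>j. j \<noteq> i \<longrightarrow> (transpose E ** A ** E)$i$j = 0)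
         \<and> (\<forall>i. (transpose E ** A ** E)$i$i \<le> A$i$i)" for J :: "'n set"
  proof (induction J rule: finite_induct)
    case empty
    show ?case by (rule exI[of _ "mat 1"]) simp
  next
    case (insert k J)
    obtain E where dE: "det E = 1" and zJ: "\<forall>i\<in>J. \<forall>j. j \<noteq> i \<longrightarrow> (transpose E ** A ** E)$i$j = 0"
      and dg: "\<forall>i. (transpose E ** A ** E)$i$i \<le> A$i$i" using insert.IH by blast
    define B where "B = transpose E ** A ** E"
    have Bsym: "transpose B = B" unfolding B_def by (rule congr_sym[OF sym])
    have Bs: "B$j$i = B$i$j" for i j using Bsym by (metis transpose_def vec_lambda_beta)
    have Bpd: "pd B" unfolding B_def using congr_pd[OF pdA] dE by simp
    have Bkk: "0 < B$k$k" by (rule pd_diag[OF Bpd])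
    define c where "c j = - B$k$j / B$k$k" for j
    define F :: "real^'n^'n" where
      "F = (\<chi> i j. if i = k then (if j = k then 1 else c j) else (if i = j then 1 else 0))"
    have dF: "det F = 1" unfolding F_def by (rule det_shear)
    have colF: "column j F = axis j 1 + (if j = k then 0 else c j *\<^sub>R axis k 1)" for j
      unfolding F_def column_def by (auto simp: vec_eq_iff axis_def)
    have Bent: "(transpose F ** B ** F)$i$j = B$i$j + (if j = k then 0 else c j * B$i$k)
       + (if i = k then 0 else c i * B$k$j) + (if i = k \<or> j = k then 0 else c i * c j * B$k$k)" for i j
      unfolding congr_entry colF
      by (cases "i = k"; cases "j = k")
         (simp_all add: matrix_vector_right_distrib matrix_vector_mult_scaleR inner_add_left
           inner_add_right quad_axis algebra_simps)
    define E' where "E' = E ** F"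
    have eq: "transpose E' ** A ** E' = transpose F ** B ** F"
      unfolding E'_def B_def by (simp add: matrix_transpose_mul matrix_mul_assoc)
    show ?case
    proof (intro exI[of _ E'] conjI ballI allI impI)
      show "det E' = 1" unfolding E'_def det_mul dE dF by simp
    next
      fix i j assume i: "i \<in> insert k J" and ij: "j \<noteq> i"
      show "(transpose E' ** A ** E')$i$j = 0"
      proof (cases "i = k")
        case True thus ?thesis using ij Bkk by (simp add: eq Bent c_def)
      next
        case False then have iJ: "i \<in> J" using i by auto
        have Bik: "B$i$k = 0" using zJ iJ False unfolding B_def by auto
        have Bij: "B$i$j = 0" using zJ iJ ij unfolding B_def by auto
        show ?thesis using False Bik Bij Bs[of i k] by (simp add: eq Bent c_def)
      qed
    next
      fix i
      show "(transpose E' ** A ** E')$i$i \<le> A$i$i"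
      proof (cases "i = k")
        case True
        have "B$k$k \<le> A$k$k" using dg unfolding B_def by blast
        thus ?thesis using True unfolding eq Bent by simp
      next
        case False
        have "(transpose F ** B ** F)$i$i = B$i$i - (B$i$k)^2 / B$k$k"
          using False Bkk Bs[of i k] by (simp add: Bent c_def field_simps power2_eq_square)
        moreover have "(B$i$k)^2 / B$k$k \<ge> 0" using Bkk by simp
        moreover have "B$i$i \<le> A$i$i" using dg unfolding B_def by blast
        ultimately show ?thesis unfolding eq by linarith
      qed
    qed
  qed
  from this[of UNIV] obtain E where dE: "det E = 1"
    and z: "\<forall>i j. j \<noteq> i \<longrightarrow> (transpose E ** A ** E)$i$j = 0"
    and dg: "\<forall>i. (transpose E ** A ** E)$i$i \<le> A$i$i" by auto
  have "pd (transpose E ** A ** E)" using congr_pd[OF pdA] dE by simp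
  hence "\<forall>i. 0 < (transpose E ** A ** E)$i$i" using pd_diag by blast
  thus ?thesis using dE z dg by metis
qed


lemma sym_entry: "transpose M = M \<Longrightarrow> (M::real^'n^'n)$j$i = M$i$j"
  by (metis transpose_def vec_lambda_beta)

lemma neg_mv: "(- N) *v x = - ((N::real^'n^'n) *v x)"
  by (simp add: matrix_vector_mult_def vec_eq_iff sum_negf)

lemma hadamard:
  fixes A :: "real^'n^'n"
  assumes sym: "transpose A = A" and pdA: "pd A"
  shows "0 < det A \<and> det A \<le> prod (\<lambda>i. A$i$i) UNIV"
proof -
  obtain E where dE: "det E = 1" and z: "\<forall>i j. i \<noteq> j \<longrightarrow> (transpose E ** A ** E)$i$j = 0"
    and dg: "\<forall>i. 0 < (transpose E ** A ** E)$i$i \<and> (transpose E ** A ** E)$i$i \<le> A$i$i"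
    using ldl[OF sym pdA] by blast
  have "det (transpose E ** A ** E) = det A" by (simp add: det_mul dE)
  moreover have "det (transpose E ** A ** E) = prod (\<lambda>i. (transpose E ** A ** E)$i$i) UNIV"
    by (rule det_diagonal) (use z in blast)
  moreover have "0 < prod (\<lambda>i. (transpose E ** A ** E)$i$i) UNIV"
    using dg by (simp add: prod_pos)
  moreover have "prod (\<lambda>i. (transpose E ** A ** E)$i$i) UNIV \<le> prod (\<lambda>i. A$i$i) UNIV"
    using dg by (intro prod_mono) (simp add: less_imp_le)
  ultimately show ?thesis by simp
qed

lemma det_mono:
  fixes P N :: "real^'n^'n"
  assumes symP: "transpose P = P" and pdP: "pd P" and symN: "transpose N = N"
    and nsd: "psd (- N)" and pdPN: "pd (P + N)"
  shows "det (P + N) \<le> det P"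
proof -
  obtain E where dE: "det E = 1" and z: "\<forall>i j. i \<noteq> j \<longrightarrow> (transpose E ** P ** E)$i$j = 0"
    and dg: "\<forall>i. 0 < (transpose E ** P ** E)$i$i \<and> (transpose E ** P ** E)$i$i \<le> P$i$i"
    using ldl[OF symP pdP] by blast
  define C where "C = transpose E ** (P + N) ** E"
  have symC: "transpose C = C" unfolding C_def
    by (rule congr_sym) (use sym_entry[OF symP] sym_entry[OF symN] in \<open>simp add: transpose_def vec_eq_iff\<close>)
  have pdC: "pd C" unfolding C_def using congr_pd[OF pdPN] dE by simp
  have Cii: "C$i$i \<le> (transpose E ** P ** E)$i$i" for i
  proof -
    have "C$i$i = column i E \<bullet> (P *v column i E) + column i E \<bullet> (N *v column i E)"
      unfolding C_def congr_entry by (simp add: matrix_vector_mult_add_rdistrib inner_add_right)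
    moreover have "0 \<le> column i E \<bullet> ((- N) *v column i E)" using nsd unfolding psd_def by blast
    ultimately show ?thesis unfolding congr_entry neg_mv by simp
  qed
  have "det C = det (P + N)" unfolding C_def by (simp add: det_mul dE)
  moreover have "det C \<le> prod (\<lambda>i. C$i$i) UNIV" using hadamard[OF symC pdC] by simp
  moreover have "prod (\<lambda>i. C$i$i) UNIV \<le> prod (\<lambda>i. (transpose E ** P ** E)$i$i) UNIV"
    using Cii pd_diag[OF pdC] by (intro prod_mono) (simp add: less_imp_le)
  moreover have "det (transpose E ** P ** E) = prod (\<lambda>i. (transpose E ** P ** E)$i$i) UNIV"
    by (rule det_diagonal) (use z in blast)
  moreover have "det (transpose E ** P ** E) = det P" by (simp add: det_mul dE)
  ultimately show ?thesis by linarith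
qed

lemma cont_mv[continuous_intros]:
  fixes f :: "'a::topological_space \<Rightarrow> real^'n^'n"
  shows "continuous_on U f \<Longrightarrow> continuous_on U (\<lambda>z. f z *v x)"
  unfolding matrix_vector_mult_def by (intro continuous_intros)
lemma cont_transpose[continuous_intros]:
  fixes f :: "'a::topological_space \<Rightarrow> real^'n^'n"
  shows "continuous_on U f \<Longrightarrow> continuous_on U (\<lambda>z. transpose (f z))"
  unfolding transpose_def by (intro continuous_intros)

lemma transpose_add': "transpose (A + B) = transpose A + transpose (B::real^'n^'n)"
  by (simp add: transpose_def vec_eq_iff)
lemma transpose_diff': "transpose (A - B) = transpose A - transpose (B::real^'n^'n)"
  by (simp add: transpose_def vec_eq_iff)
lemma sc_mv: "(c *\<^sub>R A) *v x = c *\<^sub>R ((A::real^'n^'n) *v x)"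
  by (simp add: matrix_vector_mult_def vec_eq_iff sum_distrib_left mult.assoc)
lemma add_mm_r: "(A + B) ** C = A ** C + B ** (C::real^'n^'n)"
  by (simp add: matrix_matrix_mult_def vec_eq_iff sum.distrib algebra_simps)

lemma Si_facts:
  fixes S :: "real^'n^'n"
  assumes symS: "transpose S = S" and pdS: "pd S"
  shows "S ** matrix_inv S = mat 1" "matrix_inv S ** S = mat 1"
    "transpose (matrix_inv S) = matrix_inv S" "pd (matrix_inv S)"
    "det (matrix_inv S) * det S = 1" "0 < det S"
proof -
  show dS: "0 < det S" using hadamard[OF symS pdS] by blast
  have inv: "invertible S" using dS by (simp add: invertible_det_nz)
  show i1: "S ** matrix_inv S = mat 1" and i2: "matrix_inv S ** S = mat 1" using inv_props[OF inv] by auto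
  define T where "T = matrix_inv S"
  have "S ** transpose T = mat 1"
  proof -
    have "S ** transpose T = transpose (T ** S)" using symS by (simp add: matrix_transpose_mul)
    thus ?thesis using i2 unfolding T_def by simp
  qed
  hence "transpose T = (T ** S) ** transpose T" using i2 unfolding T_def by simp
  also have "\<dots> = T" using \<open>S ** transpose T = mat 1\<close> by (simp add: matrix_mul_assoc[symmetric])
  finally show "transpose (matrix_inv S) = matrix_inv S" unfolding T_def .
  show "pd (matrix_inv S)" unfolding pd_def
  proof (intro allI impI)
    fix x :: "real^'n" assume x: "x \<noteq> 0"
    define y where "y = matrix_inv S *v x"
    have Sy: "S *v y = x" unfolding y_def by (simp add: matrix_vector_mul_assoc i1)
    hence "y \<noteq> 0" using x by auto
    hence "0 < y \<bullet> (S *v y)" using pdS unfolding pd_def by blast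
    also have "y \<bullet> (S *v y) = x \<bullet> (matrix_inv S *v x)" using Sy unfolding y_def by (simp add: inner_commute)
    finally show "0 < x \<bullet> (matrix_inv S *v x)" .
  qed
  show "det (matrix_inv S) * det S = 1" using i2 by (metis det_I det_mul)
qed

lemma diag_pd:
  fixes D :: "real^'n^'n"
  assumes "\<And>i j. i \<noteq> j \<Longrightarrow> D$i$j = 0" and "\<And>i. 0 < D$i$i"
  shows "pd D"
  unfolding pd_def
proof (intro allI impI)
  fix x :: "real^'n" assume x: "x \<noteq> 0"
  have Dx: "(D *v x)$i = D$i$i * x$i" for i
  proof -
    have "(D *v x)$i = (\<Sum>j\<in>UNIV. if j = i then D$i$i * x$i else 0)"
      unfolding matrix_vector_mult_def vec_lambda_beta by (rule sum.cong) (auto simp: assms(1))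
    thus ?thesis by simp
  qed
  obtain i where xi: "x$i \<noteq> 0" using x by (metis vec_eq_iff zero_index)
  have eq: "x \<bullet> (D *v x) = (\<Sum>j\<in>UNIV. D$j$j * (x$j)^2)"
    unfolding inner_vec_def Dx by (simp add: power2_eq_square mult_ac)
  have nn: "0 \<le> D$j$j * (x$j)^2" for j using assms(2)[of j] by (simp add: less_imp_le)
  have ps: "0 < D$i$i * (x$i)^2" using assms(2)[of i] xi by simp
  have "0 < (\<Sum>j\<in>UNIV. D$j$j * (x$j)^2)"
    by (rule sum_pos2[where i=i]) (use nn ps in auto)
  thus "0 < x \<bullet> (D *v x)" using eq by simp
qed

lemma norm_mat_bound:
  fixes K :: "real^'n^'n"
  assumes "\<And>i j. \<bar>K$i$j\<bar> \<le> R"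
  shows "norm K \<le> real CARD('n) * (real CARD('n) * R)"
proof -
  have "norm K \<le> (\<Sum>i\<in>UNIV. norm (K$i))"
    unfolding norm_vec_def by (rule L2_set_le_sum) simp
  also have "\<dots> \<le> (\<Sum>i\<in>(UNIV::'n set). real CARD('n) * R)"
  proof (rule sum_mono)
    fix i
    have "norm (K$i) \<le> (\<Sum>j\<in>UNIV. \<bar>K$i$j\<bar>)" by (rule norm_le_l1_cart)
    also have "\<dots> \<le> (\<Sum>j\<in>(UNIV::'n set). R)" by (rule sum_mono) (rule assms)
    finally show "norm (K$i) \<le> real CARD('n) * R" by simp
  qed
  finally show ?thesis by simp
qed


definition Gf :: "real^'n^'n \<Rightarrow> real \<Rightarrow> real \<times> (real^'n^'n) \<Rightarrow> real" where
  "Gf S \<delta> z = fst z * (- ln (det (matrix_inv S + (1 / fst z) *\<^sub>R snd z)) - ln (det S) + \<delta>)"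

definition Dset :: "real^'n^'n \<Rightarrow> (real \<times> (real^'n^'n)) set" where
  "Dset S = {z. 0 < fst z \<and> transpose (snd z) = snd z \<and> psd (mat 1 - snd z) \<and> (\<forall>i. snd z $ i $ i \<le> 0)
     \<and> pd (matrix_inv S + (1 / fst z) *\<^sub>R snd z)}"

lemma exists_min:
  fixes S :: "real^'n^'n"
  assumes symS: "transpose S = S" and pdS: "pd S" and dpos: "0 < \<delta>" and dmax: "\<delta> < delta_max S"
  shows "\<exists>z\<in>Dset S. \<forall>y\<in>Dset S. Gf S \<delta> z \<le> Gf S \<delta> y"
proof -
  define Si where "Si = matrix_inv S"
  have SiS: "Si ** S = mat 1" and symSi: "transpose Si = Si" and pdSi: "pd Si"
    and dSiS: "det Si * det S = 1" and dS: "0 < det S"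
    using Si_facts[OF symS pdS] unfolding Si_def by auto
  define Z where "Z = chi_proj Si"
  define Dg where "Dg = Si - Z"
  have Dg_ent: "Dg$i$j = (if i = j then Si$i$i else 0)" for i j
    unfolding Dg_def Z_def chi_proj_def by simp
  have Sii: "0 < Si$i$i" for i using pd_diag[OF pdSi] .
  have dDg: "det Dg = prod (\<lambda>i. Si$i$i) UNIV"
    by (subst det_diagonal) (auto simp: Dg_ent)
  have dDg_pos: "0 < det Dg" using Sii by (simp add: dDg prod_pos)
  have dmax_eq: "delta_max S = ln (det Dg) + ln (det S)"
    unfolding delta_max_def Si_def[symmetric] Z_def[symmetric] Dg_def[symmetric] det_mul
    using dDg_pos dS by (simp add: ln_mult)
  define dm where "dm = delta_max S"
  have dlt: "\<delta> - dm < 0" using dmax unfolding dm_def by simp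
  obtain u :: "real^'n" where ulow: "\<forall>x. (u \<bullet> (Z *v u)) * (x \<bullet> x) \<le> x \<bullet> (Z *v x)"
    using quad_lower by blast
  define m where "m = u \<bullet> (Z *v u)"
  define l0 where "l0 = 1 / (\<bar>m\<bar> + 1)"
  have l0: "0 < l0" unfolding l0_def by simp
  have l0m: "0 \<le> 1 + l0 * m"
  proof -
    have "l0 * \<bar>m\<bar> < 1" unfolding l0_def by (simp add: field_simps)
    moreover have "- (l0 * \<bar>m\<bar>) \<le> l0 * m" using l0 mult_left_mono[of "-\<bar>m\<bar>" m l0] by simp
    ultimately show ?thesis by linarith
  qed
  define K0 where "K0 = - l0 *\<^sub>R Z"
  have symZ: "transpose Z = Z" unfolding Z_def chi_proj_def transpose_def
    using sym_entry[OF symSi] by (simp add: vec_eq_iff)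
  have AK0: "Si + (1 / l0) *\<^sub>R K0 = Dg" unfolding K0_def Dg_def using l0 by simp
  have q0D: "(l0, K0) \<in> Dset S"
    unfolding Dset_def Si_def[symmetric]
  proof (simp only: mem_Collect_eq fst_conv snd_conv, intro conjI allI)
    show "0 < l0" by (rule l0)
    show "transpose K0 = K0" unfolding K0_def using sym_entry[OF symZ] by (simp add: transpose_def vec_eq_iff)
    show "psd (mat 1 - K0)" unfolding psd_def
    proof
      fix x :: "real^'n"
      have "x \<bullet> ((mat 1 - K0) *v x) = x \<bullet> x + l0 * (x \<bullet> (Z *v x))"
        unfolding K0_def by (simp add: matrix_vector_mult_diff_rdistrib matrix_vector_mult_add_rdistrib sc_mv inner_diff_right inner_add_right)
      also have "\<dots> \<ge> x \<bullet> x + l0 * (m * (x \<bullet> x))"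
        using ulow l0 unfolding m_def by (simp add: mult_left_mono)
      moreover have "x \<bullet> x + l0 * (m * (x \<bullet> x)) = (1 + l0 * m) * (x \<bullet> x)" by (simp add: algebra_simps)
      moreover have "0 \<le> (1 + l0 * m) * (x \<bullet> x)" using l0m by simp
      ultimately show "0 \<le> x \<bullet> ((mat 1 - K0) *v x)" by linarith
    qed
    fix i show "K0 $ i $ i \<le> 0" unfolding K0_def Z_def chi_proj_def by simp
  next
    show "pd (Si + (1 / l0) *\<^sub>R K0)" unfolding AK0
      by (rule diag_pd) (auto simp: Dg_ent Sii)
  qed
  have GK0: "Gf S \<delta> (l0, K0) = l0 * (\<delta> - dm)"
    unfolding Gf_def Si_def[symmetric] using AK0 dmax_eq unfolding dm_def by simp
  define c where "c = l0 * (\<delta> - dm)"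
  have c0: "c < 0" unfolding c_def using l0 dlt by (simp add: mult_pos_neg)
  have Asym: "transpose (Si + (1 / fst z) *\<^sub>R snd z) = Si + (1 / fst z) *\<^sub>R snd z"
    if "z \<in> Dset S" for z
    using that unfolding Dset_def by (simp add: transpose_add' transpose_scalar symSi)
  have Apd: "pd (Si + (1 / fst z) *\<^sub>R snd z)" if "z \<in> Dset S" for z
    using that unfolding Dset_def Si_def by simp
  have low: "fst z * (\<delta> - dm) \<le> Gf S \<delta> z" if zD: "z \<in> Dset S" for z
  proof -
    define A where "A = Si + (1 / fst z) *\<^sub>R snd z"
    have lz: "0 < fst z" using zD unfolding Dset_def by simp
    have h: "0 < det A \<and> det A \<le> prod (\<lambda>i. A$i$i) UNIV"
      using hadamard[OF Asym[OF zD] Apd[OF zD]] unfolding A_def .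
    have "prod (\<lambda>i. A$i$i) UNIV \<le> prod (\<lambda>i. Si$i$i) UNIV"
    proof (rule prod_mono)
      fix i
      have "snd z $ i $ i \<le> 0" using zD unfolding Dset_def by simp
      hence "A$i$i \<le> Si$i$i" unfolding A_def using lz by (simp add: divide_nonpos_pos)
      moreover have "0 < A$i$i" using pd_diag[OF Apd[OF zD]] unfolding A_def .
      ultimately show "0 \<le> A$i$i \<and> A$i$i \<le> Si$i$i" by simp
    qed
    hence "det A \<le> det Dg" using h dDg by simp
    hence "ln (det A) \<le> ln (det Dg)" using h by simp
    hence "\<delta> - dm \<le> - ln (det A) - ln (det S) + \<delta>" using dmax_eq unfolding dm_def by simp
    hence "fst z * (\<delta> - dm) \<le> fst z * (- ln (det A) - ln (det S) + \<delta>)"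
      using lz by (simp add: mult_left_mono)
    thus ?thesis unfolding Gf_def A_def Si_def .
  qed
  have lam_lo: "l0 \<le> fst z" if "z \<in> Dset S" "Gf S \<delta> z \<le> c" for z
  proof -
    have "fst z * (\<delta> - dm) \<le> l0 * (\<delta> - dm)" using low[OF that(1)] that(2) unfolding c_def by simp
    thus ?thesis using dlt by simp
  qed
  have contf: "continuous_on UNIV (\<lambda>t::real. det (mat 1 + t *\<^sub>R S))"
    by (intro continuous_intros)
  have "1 < exp \<delta>" using dpos by simp
  then obtain t0 where t0: "0 < t0" and t0b: "\<And>t. \<bar>t\<bar> < t0 \<Longrightarrow> det (mat 1 + t *\<^sub>R S) < exp \<delta>"
  proof -
    from contf have "\<exists>d>0. \<forall>x'\<in>UNIV. dist x' 0 < d \<longrightarrow> dist (det (mat 1 + x' *\<^sub>R S)) (det (mat 1 + 0 *\<^sub>R S)) < exp \<delta> - 1"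
    proof -
      have e: "0 < exp \<delta> - 1" using \<open>1 < exp \<delta>\<close> by simp
      show ?thesis using contf[unfolded continuous_on_iff] e by blast
    qed
    then obtain d where d: "d > 0" "\<forall>x'. \<bar>x'\<bar> < d \<longrightarrow> \<bar>det (mat 1 + x' *\<^sub>R S) - 1\<bar> < exp \<delta> - 1"
      by (auto simp: dist_real_def)
    show ?thesis using d by (intro that[of d]) (auto dest!: spec simp: abs_less_iff)
  qed
  have hi: "0 < Gf S \<delta> z" if zD: "z \<in> Dset S" and big: "1 / t0 < fst z" for z
  proof -
    define l where "l = fst z"
    define K where "K = snd z"
    have lz: "0 < l" using zD unfolding Dset_def l_def by simp
    define P where "P = Si + (1 / l) *\<^sub>R mat 1"
    define N where "N = (1 / l) *\<^sub>R (K - mat 1)"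
    have AeqPN: "Si + (1 / l) *\<^sub>R K = P + N" unfolding P_def N_def by (simp add: algebra_simps)
    have symK: "transpose K = K" using zD unfolding Dset_def K_def by simp
    have symP: "transpose P = P" unfolding P_def by (simp add: transpose_add' transpose_scalar symSi)
    have pdP: "pd P" unfolding pd_def
    proof (intro allI impI)
      fix x :: "real^'n" assume x: "x \<noteq> 0"
      have "x \<bullet> (P *v x) = x \<bullet> (Si *v x) + (1 / l) * (x \<bullet> x)"
        unfolding P_def by (simp add: matrix_vector_mult_add_rdistrib sc_mv inner_add_right)
      moreover have "0 < x \<bullet> (Si *v x)" using pdSi x unfolding pd_def by blast
      moreover have "0 \<le> (1 / l) * (x \<bullet> x)" using lz by simp
      ultimately show "0 < x \<bullet> (P *v x)" by linarith
    qed
    have symN: "transpose N = N" unfolding N_def by (simp add: transpose_diff' transpose_scalar symK)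
    have nsd: "psd (- N)" unfolding psd_def
    proof
      fix x :: "real^'n"
      have "- N = (1 / l) *\<^sub>R (mat 1 - K)" unfolding N_def by (simp add: algebra_simps)
      hence "x \<bullet> ((- N) *v x) = (1 / l) * (x \<bullet> ((mat 1 - K) *v x))" by (simp add: sc_mv)
      moreover have "0 \<le> x \<bullet> ((mat 1 - K) *v x)" using zD unfolding Dset_def psd_def K_def by simp
      ultimately show "0 \<le> x \<bullet> ((- N) *v x)" using lz by simp
    qed
    have pdPN: "pd (P + N)" using Apd[OF zD] unfolding AeqPN[symmetric] l_def K_def .
    have detle: "det (P + N) \<le> det P" by (rule det_mono[OF symP pdP symN nsd pdPN])
    have "P ** S = mat 1 + (1 / l) *\<^sub>R S" unfolding P_def add_mm_r SiS
      by (simp add: scalar_matrix_assoc[symmetric])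
    hence dPS: "det P * det S = det (mat 1 + (1 / l) *\<^sub>R S)" by (metis det_mul)
    have "1 / l < t0" using big lz t0 unfolding l_def by (simp add: field_simps)
    hence "det (mat 1 + (1 / l) *\<^sub>R S) < exp \<delta>" using lz by (intro t0b) simp
    hence "det (P + N) * det S < exp \<delta>" using detle dS dPS by (smt (verit) mult_right_mono)
    moreover have "0 < det (P + N)" using hadamard[OF _ pdPN] symP symN
      by (simp add: transpose_add')
    ultimately have "ln (det (P + N) * det S) < \<delta>" using dS by (metis exp_gt_zero ln_exp ln_less_cancel_iff mult_pos_pos)
    hence "ln (det (P + N)) + ln (det S) < \<delta>" using dS \<open>0 < det (P + N)\<close> by (simp add: ln_mult)
    hence "0 < - ln (det (Si + (1 / l) *\<^sub>R K)) - ln (det S) + \<delta>" unfolding AeqPN by simp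
    thus ?thesis unfolding Gf_def Si_def[symmetric] l_def[symmetric] K_def[symmetric] using lz by simp
  qed
  define b where "b = max l0 (1 / t0)"
  have lam_hi: "fst z \<le> b" if "z \<in> Dset S" "Gf S \<delta> z \<le> c" for z
  proof (rule ccontr)
    assume "\<not> fst z \<le> b"
    hence "1 / t0 < fst z" unfolding b_def by simp
    thus False using hi[OF that(1)] that(2) c0 by simp
  qed
  define eta where "eta = exp (\<delta> - ln (det S))"
  have eta: "0 < eta" unfolding eta_def by simp
  have deta: "eta \<le> det (Si + (1 / fst z) *\<^sub>R snd z)" if zD: "z \<in> Dset S" and Gc: "Gf S \<delta> z \<le> c" for z
  proof -
    define A where "A = Si + (1 / fst z) *\<^sub>R snd z"
    have lz: "0 < fst z" using zD unfolding Dset_def by simp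
    have dA: "0 < det A" using hadamard[OF Asym[OF zD] Apd[OF zD]] unfolding A_def by blast
    have "fst z * (- ln (det A) - ln (det S) + \<delta>) < 0" using Gc c0 unfolding Gf_def A_def Si_def by simp
    hence "- ln (det A) - ln (det S) + \<delta> < 0" using lz by (simp add: mult_less_0_iff)
    hence "\<delta> - ln (det S) < ln (det A)" by simp
    hence "eta < exp (ln (det A))" unfolding eta_def by simp
    thus ?thesis using dA unfolding A_def by simp
  qed
  define Am where "Am z = Si + (1 / max l0 (fst z)) *\<^sub>R snd z" for z :: "real \<times> (real^'n^'n)"
  have Am_eq: "Am z = Si + (1 / fst z) *\<^sub>R snd z" if "l0 \<le> fst z" for z
    using that unfolding Am_def by (simp add: max_absorb2)
  define W where "W = {z. l0 \<le> fst z \<and> fst z \<le> b \<and> transpose (snd z) = snd z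
     \<and> (\<forall>x. 0 \<le> x \<bullet> ((mat 1 - snd z) *v x)) \<and> (\<forall>i. snd z $ i $ i \<le> 0)
     \<and> (\<forall>x. 0 \<le> x \<bullet> (Am z *v x)) \<and> eta \<le> det (Am z)}"
  have sub1: "z \<in> W" if zD: "z \<in> Dset S" and Gc: "Gf S \<delta> z \<le> c" for z
  proof -
    have lo: "l0 \<le> fst z" by (rule lam_lo[OF zD Gc])
    have pdA: "pd (Am z)" using Apd[OF zD] Am_eq[OF lo] by simp
    have "\<forall>x. 0 \<le> x \<bullet> (Am z *v x)"
    proof
      fix x :: "real^'n"
      show "0 \<le> x \<bullet> (Am z *v x)" using pdA unfolding pd_def by (cases "x = 0") (auto intro: less_imp_le)
    qed
    thus ?thesis unfolding W_def using zD lo lam_hi[OF zD Gc] deta[OF zD Gc] Am_eq[OF lo]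
      unfolding Dset_def psd_def by auto
  qed
  have WD: "z \<in> Dset S" if zW: "z \<in> W" for z
  proof -
    have lo: "l0 \<le> fst z" and symK: "transpose (snd z) = snd z" and psA: "psd (Am z)"
      and dA: "eta \<le> det (Am z)"
      using zW unfolding W_def psd_def by auto
    have symA: "transpose (Am z) = Am z" unfolding Am_def by (simp add: transpose_add' transpose_scalar symSi symK)
    have "pd (Am z)" by (rule psd_det_pd[OF psA symA]) (use dA eta in linarith)
    thus ?thesis using zW l0 lo unfolding W_def Dset_def psd_def Am_eq[OF lo] Si_def by auto
  qed
  have q0W: "(l0, K0) \<in> W" using sub1[OF q0D] GK0 unfolding c_def by simp
  have closedW: "closed W"
    unfolding W_def Am_def
    by (intro closed_Collect_conj closed_Collect_all closed_Collect_le closed_Collect_eq continuous_intros)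
       (use l0 in \<open>auto simp: max_def\<close>)
  define T where "T = (\<Sum>i\<in>UNIV. Si$i$i)"
  have SiT: "Si$i$i \<le> T" for i unfolding T_def
    by (rule member_le_sum) (auto intro: less_imp_le Sii)
  define R where "R = 1 + b * T"
  have b0: "0 < b" unfolding b_def using l0 by simp
  have T0: "0 \<le> T" using SiT[of undefined] Sii[of undefined] by linarith
  have entb: "\<bar>snd z $ i $ j\<bar> \<le> R" if zW: "z \<in> W" for z i j
  proof -
    define K where "K = snd z"
    have lo: "l0 \<le> fst z" and hi: "fst z \<le> b" and symK: "transpose K = K"
      and psI: "psd (mat 1 - K)" and dg: "\<forall>i. K $ i $ i \<le> 0" and psA: "psd (Am z)"
      using zW unfolding W_def psd_def K_def by auto
    have lz: "0 < fst z" using lo l0 by simp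
    have kd: "- b * T \<le> K $ k $ k" for k
    proof -
      have "0 \<le> Am z $ k $ k" by (rule psd_diag[OF psA])
      hence "0 \<le> Si$k$k + K$k$k / fst z" unfolding Am_eq[OF lo] K_def by simp
      hence "- (fst z * Si$k$k) \<le> K$k$k" using lz by (simp add: field_simps)
      moreover have "fst z * Si$k$k \<le> b * T" using hi SiT[of k] lz Sii[of k] b0
        by (intro mult_mono) auto
      ultimately show ?thesis by simp
    qed
    have bT: "0 \<le> b * T" using b0 T0 by simp
    show ?thesis
    proof (cases "i = j")
      case True
      thus ?thesis using kd[of i] dg bT unfolding K_def R_def by (auto simp: abs_le_iff)
    next
      case False
      have symM: "transpose (mat 1 - K) = mat 1 - K" by (simp add: transpose_diff' symK)
      have "2 * \<bar>(mat 1 - K) $ i $ j\<bar> \<le> (mat 1 - K) $ i $ i + (mat 1 - K) $ j $ j"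
        by (rule psd_offdiag[OF psI symM])
      thus ?thesis using False kd[of i] kd[of j] unfolding K_def R_def by (simp add: mat_def)
    qed
  qed
  have boundedW: "bounded W"
  proof (rule bounded_subset)
    show "bounded ({l0..b} \<times> cball (0::real^'n^'n) (real CARD('n) * (real CARD('n) * R)))"
      by (intro bounded_Times) auto
    show "W \<subseteq> {l0..b} \<times> cball 0 (real CARD('n) * (real CARD('n) * R))"
    proof
      fix z assume zW: "z \<in> W"
      have "norm (snd z) \<le> real CARD('n) * (real CARD('n) * R)"
        by (rule norm_mat_bound) (rule entb[OF zW])
      thus "z \<in> {l0..b} \<times> cball 0 (real CARD('n) * (real CARD('n) * R))"
        using zW unfolding W_def by (cases z) auto
    qed
  qed
  have compW: "compact W" using boundedW closedW by (simp add: compact_eq_bounded_closed)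
  have contG: "continuous_on W (Gf S \<delta>)"
  proof -
    have eq: "\<And>z. z \<in> W \<Longrightarrow> Gf S \<delta> z = fst z * (- ln (det (Am z)) - ln (det S) + \<delta>)"
      unfolding Gf_def W_def Si_def[symmetric] using Am_eq by auto
    have dpos: "\<And>z. z \<in> W \<Longrightarrow> det (Si + (1 / max l0 (fst z)) *\<^sub>R snd z) \<noteq> 0"
      using eta unfolding W_def Am_def by force
    have "continuous_on W (\<lambda>z. fst z * (- ln (det (Am z)) - ln (det S) + \<delta>))"
      unfolding Am_def by (intro continuous_intros) (use l0 dpos in \<open>auto simp: max_def\<close>)
    with continuous_on_cong[OF refl eq] show ?thesis by (rule iffD2)
  qed
  obtain zm where zmW: "zm \<in> W" and zmin: "\<And>y. y \<in> W \<Longrightarrow> Gf S \<delta> zm \<le> Gf S \<delta> y"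
    using continuous_attains_inf[OF compW _ contG] q0W by blast
  show ?thesis
  proof (intro bexI[of _ zm] ballI)
    show "zm \<in> Dset S" by (rule WD[OF zmW])
    fix y assume yD: "y \<in> Dset S"
    show "Gf S \<delta> zm \<le> Gf S \<delta> y"
    proof (cases "Gf S \<delta> y \<le> c")
      case True thus ?thesis using zmin sub1[OF yD] by blast
    next
      case False
      have "Gf S \<delta> zm \<le> c" using zmin[OF q0W] GK0 unfolding c_def by simp
      thus ?thesis using False by simp
    qed
  qed
qed


lemma diag_quad:
  fixes D :: "real^'n^'n"
  assumes "\<And>i j. i \<noteq> j \<Longrightarrow> D$i$j = 0"
  shows "x \<bullet> (D *v x) = (\<Sum>j\<in>UNIV. D$j$j * (x$j)^2)"
proof -
  have Dx: "(D *v x)$i = D$i$i * x$i" for i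
  proof -
    have "(D *v x)$i = (\<Sum>j\<in>UNIV. if j = i then D$i$i * x$i else 0)"
      unfolding matrix_vector_mult_def vec_lambda_beta by (rule sum.cong) (auto simp: assms(1))
    thus ?thesis by simp
  qed
  show ?thesis unfolding inner_vec_def Dx by (simp add: power2_eq_square mult_ac)
qed

lemma diag_psd:
  fixes D :: "real^'n^'n"
  assumes "\<And>i j. i \<noteq> j \<Longrightarrow> D$i$j = 0" and "\<And>i. 0 \<le> D$i$i"
  shows "psd D"
  unfolding psd_def
proof
  fix x :: "real^'n"
  have "0 \<le> (\<Sum>j\<in>UNIV. D$j$j * (x$j)^2)" by (rule sum_nonneg) (simp add: assms(2))
  thus "0 \<le> x \<bullet> (D *v x)" using diag_quad[OF assms(1), of x] by simp
qed

lemma Jtilde_Gf: "Jtilde S \<delta> (l, G, T) = Gf S \<delta> (l, chi_proj T - G)"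
  unfolding Jtilde_def Gf_def by simp

lemma C0_Dset:
  assumes "(l, G, T) \<in> C0 S"
  shows "(l, chi_proj T - G) \<in> Dset S"
proof -
  have l: "0 < l" and sG: "transpose G = G" and sT: "transpose T = T"
    and p1: "psd (mat 1 + G - chi_proj T)" and pG: "psd G"
    and pdA: "pd (matrix_inv S + (1 / l) *\<^sub>R (chi_proj T - G))"
    using assms unfolding C0_def symmetric_mat_def by auto
  have "transpose (chi_proj T - G) = chi_proj T - G"
    using sym_entry[OF sT] sym_entry[OF sG] by (simp add: chi_proj_def transpose_def vec_eq_iff)
  moreover have "psd (mat 1 - (chi_proj T - G))"
  proof -
    have "mat 1 - (chi_proj T - G) = mat 1 + G - chi_proj T" by (simp add: algebra_simps)
    thus ?thesis using p1 by metis
  qed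
  moreover have "(chi_proj T - G) $ i $ i \<le> 0" for i using psd_diag[OF pG, of i] by (simp add: chi_proj_def)
  ultimately show ?thesis unfolding Dset_def using l pdA by simp
qed

lemma Crestr_C0:
  assumes "y \<in> C_restr S e M r a b" "0 < e" "0 < b"
  shows "y \<in> C0 S"
proof -
  obtain l G T where y: "y = (l, G, T)" by (cases y) auto
  have le: "e \<le> l" and l1: "loewner_le (T - G) (mat 1)" and l2: "loewner_le 0 G"
    and dG: "diagonal_mat G" and zT: "zero_diag_sym T"
    and l3: "loewner_le (b *\<^sub>R mat 1) (matrix_inv S + (1 / l) *\<^sub>R (T - G))"
    using assms(1) unfolding y C_restr_def by auto
  have chiT: "chi_proj T = T" using zT unfolding zero_diag_sym_def chi_proj_def by (auto simp: vec_eq_iff)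
  have "G$j$i = G$i$j" for i j using dG unfolding diagonal_mat_def by (cases "i = j") auto
  hence sG: "symmetric_mat G" unfolding symmetric_mat_def by (simp add: transpose_def vec_eq_iff)
  have sT: "symmetric_mat T" using zT unfolding zero_diag_sym_def by simp
  have eqM: "mat 1 + G - chi_proj T = mat 1 - (T - G)" unfolding chiT by (simp add: algebra_simps)
  have p1: "psd (mat 1 + G - chi_proj T)" using l1 eqM unfolding loewner_le_def by metis
  have pG: "psd G" using l2 unfolding loewner_le_def by simp
  have pdA: "pd (matrix_inv S + (1 / l) *\<^sub>R (chi_proj T - G))" unfolding chiT pd_def
  proof (intro allI impI)
    fix x :: "real^'a" assume x: "x \<noteq> 0"
    define A where "A = matrix_inv S + (1 / l) *\<^sub>R (T - G)"
    have "0 \<le> x \<bullet> ((A - b *\<^sub>R mat 1) *v x)" using l3 unfolding loewner_le_def psd_def A_def by blast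
    also have "x \<bullet> ((A - b *\<^sub>R mat 1) *v x) = x \<bullet> (A *v x) - b * (x \<bullet> x)"
      by (simp add: matrix_vector_mult_diff_rdistrib sc_mv inner_diff_right)
    finally have "b * (x \<bullet> x) \<le> x \<bullet> (A *v x)" by simp
    moreover have "0 < b * (x \<bullet> x)" using x assms(3) by simp
    ultimately show "0 < x \<bullet> ((matrix_inv S + (1 / l) *\<^sub>R (T - G)) *v x)" unfolding A_def by linarith
  qed
  show ?thesis unfolding y C0_def using sG sT le assms(2) p1 pG pdA by auto
qed

theorem theorem1:
  fixes S :: "real ^ 'n ^ 'n" and \<delta> :: real
  assumes "symmetric_mat S" and "pd S"
    and "0 < \<delta>" and "\<delta> < delta_max S"
  shows "\<exists>\<epsilon> M \<rho> \<alpha> \<beta>. 0 < \<epsilon> \<and> \<epsilon> \<le> M \<and> 0 < \<alpha> \<and> 0 < \<beta> \<and>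
     (\<exists>p\<in>C_restr S \<epsilon> M \<rho> \<alpha> \<beta>. \<exists>q\<in>C0 S.
        (\<forall>y\<in>C_restr S \<epsilon> M \<rho> \<alpha> \<beta>. Jtilde S \<delta> p \<le> Jtilde S \<delta> y) \<and>
        (\<forall>y\<in>C0 S. Jtilde S \<delta> q \<le> Jtilde S \<delta> y) \<and>
        Jtilde S \<delta> p = Jtilde S \<delta> q)"
proof -
  have symS: "transpose S = S" using assms(1) unfolding symmetric_mat_def .
  obtain zm where zmD: "zm \<in> Dset S" and zmin: "\<And>y. y \<in> Dset S \<Longrightarrow> Gf S \<delta> zm \<le> Gf S \<delta> y"
    using exists_min[OF symS assms(2-4)] by blast
  define l where "l = fst zm"
  define K where "K = snd zm"
  have l: "0 < l" and symK: "transpose K = K" and pI: "psd (mat 1 - K)" and dgK: "\<And>i. K$i$i \<le> 0"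
    and pdA: "pd (matrix_inv S + (1 / l) *\<^sub>R K)"
    using zmD unfolding Dset_def l_def K_def by auto
  define G :: "real^'n^'n" where "G = (\<chi> i j. if i = j then - K$i$i else 0)"
  define T where "T = K + G"
  have Gent: "G$i$j = (if i = j then - K$i$i else 0)" for i j unfolding G_def by simp
  have TmG: "T - G = K" unfolding T_def by simp
  have chiT: "chi_proj T = T" unfolding T_def chi_proj_def by (auto simp: vec_eq_iff Gent)
  have KG: "chi_proj T - G = K" unfolding chiT TmG ..
  define p where "p = (l, G, T)"
  have Jp: "Jtilde S \<delta> p = Gf S \<delta> zm" unfolding p_def Jtilde_Gf KG l_def K_def by simp
  obtain u1 :: "real^'n" where u1: "\<forall>x. (u1 \<bullet> (K *v u1)) * (x \<bullet> x) \<le> x \<bullet> (K *v x)"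
    using quad_lower by blast
  define rho where "rho = u1 \<bullet> (K *v u1)"
  define A where "A = matrix_inv S + (1 / l) *\<^sub>R K"
  obtain u2 :: "real^'n" where u2n: "norm u2 = 1" and u2: "\<forall>x. (u2 \<bullet> (A *v u2)) * (x \<bullet> x) \<le> x \<bullet> (A *v x)"
    using quad_lower by blast
  define beta where "beta = u2 \<bullet> (A *v u2)"
  have beta: "0 < beta" unfolding beta_def using pdA u2n unfolding pd_def A_def by (metis norm_zero zero_neq_one)
  define alpha where "alpha = 1 + (\<Sum>i\<in>UNIV. - K$i$i)"
  have Kle0: "- K$i$i \<le> (\<Sum>j\<in>UNIV. - K$j$j)" for i
    by (rule member_le_sum) (auto simp: dgK)
  have Kle: "- K$i$i \<le> alpha - 1" for i using Kle0[of i] unfolding alpha_def by simp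
  have Kle2: "0 \<le> alpha + K$i$i" for i using Kle[of i] by linarith
  have alpha: "0 < alpha" using Kle[of undefined] dgK[of undefined] by linarith
  have pC: "p \<in> C_restr S l l rho alpha beta"
    unfolding p_def C_restr_def
  proof (simp only: mem_Collect_eq prod.case, intro conjI)
    show "l \<le> l" by simp
    show "l \<le> l" by simp
    show "loewner_le (rho *\<^sub>R mat 1) (T - G)" unfolding loewner_le_def psd_def TmG
    proof
      fix x :: "real^'n"
      have "x \<bullet> ((K - rho *\<^sub>R mat 1) *v x) = x \<bullet> (K *v x) - rho * (x \<bullet> x)"
        by (simp add: matrix_vector_mult_diff_rdistrib sc_mv inner_diff_right)
      thus "0 \<le> x \<bullet> ((K - rho *\<^sub>R mat 1) *v x)" using u1 unfolding rho_def by (simp add: mult.commute)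
    qed
    show "loewner_le (T - G) (mat 1)" unfolding loewner_le_def TmG by (rule pI)
    show "loewner_le 0 G" unfolding loewner_le_def
      by (rule diag_psd) (auto simp: Gent dgK)
    show "loewner_le G (alpha *\<^sub>R mat 1)" unfolding loewner_le_def
      by (rule diag_psd) (auto simp: Gent mat_def Kle2)
    show "diagonal_mat G" unfolding diagonal_mat_def by (simp add: Gent)
    show "zero_diag_sym T" unfolding zero_diag_sym_def symmetric_mat_def T_def
      using sym_entry[OF symK] by (auto simp: transpose_def vec_eq_iff Gent)
    show "loewner_le (beta *\<^sub>R mat 1) (matrix_inv S + (1 / l) *\<^sub>R (T - G))"
      unfolding loewner_le_def psd_def TmG A_def[symmetric]
    proof
      fix x :: "real^'n"
      have "x \<bullet> ((A - beta *\<^sub>R mat 1) *v x) = x \<bullet> (A *v x) - beta * (x \<bullet> x)"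
        by (simp add: matrix_vector_mult_diff_rdistrib sc_mv inner_diff_right)
      thus "0 \<le> x \<bullet> ((A - beta *\<^sub>R mat 1) *v x)" using u2 unfolding beta_def by (simp add: mult.commute)
    qed
  qed
  have pC0: "p \<in> C0 S" by (rule Crestr_C0[OF pC l beta])
  have minC0: "Jtilde S \<delta> p \<le> Jtilde S \<delta> y" if "y \<in> C0 S" for y
  proof -
    obtain l' G' T' where y: "y = (l', G', T')" by (cases y) auto
    have "(l', chi_proj T' - G') \<in> Dset S" using C0_Dset that unfolding y by blast
    thus ?thesis unfolding y Jp Jtilde_Gf by (rule zmin)
  qed
  show ?thesis
  proof (intro exI conjI bexI ballI)
    show "0 < l" by (rule l)
    show "l \<le> l" by simp
    show "0 < alpha" by (rule alpha)
    show "0 < beta" by (rule beta)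
    show "p \<in> C_restr S l l rho alpha beta" by (rule pC)
    show "p \<in> C0 S" by (rule pC0)
    show "Jtilde S \<delta> p = Jtilde S \<delta> p" ..
    fix y assume "y \<in> C_restr S l l rho alpha beta"
    thus "Jtilde S \<delta> p \<le> Jtilde S \<delta> y" using minC0 Crestr_C0 l beta by blast
  next
    fix y assume "y \<in> C0 S"
    thus "Jtilde S \<delta> p \<le> Jtilde S \<delta> y" by (rule minC0)
  qed
qed

end
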